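(* Let $G_{\lambda,k}$ be a skeleton of a connected graph $G$ with natural map $f$, and let $M=\min\{\lambda,k\}$. If two distinct vertices $x,y$ of $G_{\lambda,k}$ are not joined by an edge, then their preimages $f^{-1}(x)$ and $f^{-1}(y)$ in $G$ are $M$-disjoint.
   Context: $d$ is the graph metric on vertices. Sets $X,Y$ are $M$-disjoint if $d(a,b)>M$ for all $a\in X,b\in Y$. A set $X$ is $k$-connected if any two of its points are joined by a finite sequence in $X$ with consecutive distances $\le k$. Skeleton $G_{\lambda,k}$ (root $x_0\in V(G)$, scale $\lambda\ge1$, connectivity $k\ge1$): layers $A_{N,\lambda}=\{x: N\lambda<d(x,x_0)\le(N+1)\lambda\}$, $N\in\mathbb Z$; blocks are the maximal $k$-connected subsets of layers; $G_{\lambda,k}$ has a vertex per block and an edge between two blocks iff an edge of $G$ joins a vertex of one to a vertex of the other. The natural map $f$ sends each vertex of $G$ to its block. *)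

theory Defs
  imports Complex_Main
begin

definition graph :: "'a set \<Rightarrow> ('a \<Rightarrow> 'a \<Rightarrow> bool) \<Rightarrow> bool" where
  "graph V E \<longleftrightarrow> (\<forall>u v. E u v \<longrightarrow> u \<in> V \<and> v \<in> V \<and> u \<noteq> v \<and> E v u)"

definition walk :: "'a set \<Rightarrow> ('a \<Rightarrow> 'a \<Rightarrow> bool) \<Rightarrow> 'a \<Rightarrow> 'a \<Rightarrow> nat \<Rightarrow> bool" where
  "walk V E u v n \<longleftrightarrow> (\<exists>p. length p = Suc n \<and> hd p = u \<and> last p = v \<and> set p \<subseteq> V
      \<and> (\<forall>i<n. E (p ! i) (p ! Suc i)))"

definition connected_graph :: "'a set \<Rightarrow> ('a \<Rightarrow> 'a \<Rightarrow> bool) \<Rightarrow> bool" where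
  "connected_graph V E \<longleftrightarrow> V \<noteq> {} \<and> (\<forall>u\<in>V. \<forall>v\<in>V. \<exists>n. walk V E u v n)"

definition gdist :: "'a set \<Rightarrow> ('a \<Rightarrow> 'a \<Rightarrow> bool) \<Rightarrow> 'a \<Rightarrow> 'a \<Rightarrow> nat" where
  "gdist V E u v = (LEAST n. walk V E u v n)"

definition M_disjoint :: "'a set \<Rightarrow> ('a \<Rightarrow> 'a \<Rightarrow> bool) \<Rightarrow> real \<Rightarrow> 'a set \<Rightarrow> 'a set \<Rightarrow> bool" where
  "M_disjoint V E M X Y \<longleftrightarrow> (\<forall>a\<in>X. \<forall>b\<in>Y. real (gdist V E a b) > M)"

definition k_connected :: "'a set \<Rightarrow> ('a \<Rightarrow> 'a \<Rightarrow> bool) \<Rightarrow> real \<Rightarrow> 'a set \<Rightarrow> bool" where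
  "k_connected V E k X \<longleftrightarrow> (\<forall>a\<in>X. \<forall>b\<in>X. \<exists>p. p \<noteq> [] \<and> hd p = a \<and> last p = b \<and> set p \<subseteq> X
      \<and> (\<forall>i < length p - 1. real (gdist V E (p ! i) (p ! Suc i)) \<le> k))"

definition layer :: "'a set \<Rightarrow> ('a \<Rightarrow> 'a \<Rightarrow> bool) \<Rightarrow> 'a \<Rightarrow> real \<Rightarrow> int \<Rightarrow> 'a set" where
  "layer V E x0 lam N = {x\<in>V. real_of_int N * lam < real (gdist V E x x0)
                               \<and> real (gdist V E x x0) \<le> (real_of_int N + 1) * lam}"

definition is_block :: "'a set \<Rightarrow> ('a \<Rightarrow> 'a \<Rightarrow> bool) \<Rightarrow> 'a \<Rightarrow> real \<Rightarrow> real \<Rightarrow> 'a set \<Rightarrow> bool" where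
  "is_block V E x0 lam k B \<longleftrightarrow> (\<exists>N. B \<subseteq> layer V E x0 lam N \<and> B \<noteq> {} \<and> k_connected V E k B
      \<and> (\<forall>C. B \<subseteq> C \<and> C \<subseteq> layer V E x0 lam N \<and> k_connected V E k C \<longrightarrow> C = B))"

definition skel_vertices :: "'a set \<Rightarrow> ('a \<Rightarrow> 'a \<Rightarrow> bool) \<Rightarrow> 'a \<Rightarrow> real \<Rightarrow> real \<Rightarrow> 'a set set" where
  "skel_vertices V E x0 lam k = {B. is_block V E x0 lam k B}"

definition skel_edge :: "('a \<Rightarrow> 'a \<Rightarrow> bool) \<Rightarrow> 'a set \<Rightarrow> 'a set \<Rightarrow> bool" where
  "skel_edge E B C \<longleftrightarrow> (\<exists>u\<in>B. \<exists>v\<in>C. E u v)"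

definition skel_map :: "'a set \<Rightarrow> ('a \<Rightarrow> 'a \<Rightarrow> bool) \<Rightarrow> 'a \<Rightarrow> real \<Rightarrow> real \<Rightarrow> 'a \<Rightarrow> 'a set" where
  "skel_map V E x0 lam k v = (THE B. is_block V E x0 lam k B \<and> v \<in> B)"

end

theory Submission
  imports Defs
begin

lemma succ_nth: "successively R p \<longleftrightarrow> (\<forall>i < length p - 1. R (p!i) (p!Suc i))"
proof (induction R p rule: successively.induct)
  case (3 P x y xs)
  have "(\<forall>i < length (x # y # xs) - 1. P ((x#y#xs)!i) ((x#y#xs)!Suc i)) \<longleftrightarrow>
        P x y \<and> (\<forall>i < length (y # xs) - 1. P ((y#xs)!i) ((y#xs)!Suc i))"
    by (auto simp: less_Suc_eq_0_disj)
  then show ?case using 3 by simp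
qed auto

lemma walk_alt: "walk V E u v n \<longleftrightarrow> (\<exists>p. length p = Suc n \<and> hd p = u \<and> last p = v \<and> set p \<subseteq> V \<and> successively E p)"
  unfolding walk_def succ_nth by auto

lemma kconn_alt: "k_connected V E k X \<longleftrightarrow> (\<forall>a\<in>X. \<forall>b\<in>X. \<exists>p. p \<noteq> [] \<and> hd p = a \<and> last p = b \<and> set p \<subseteq> X
      \<and> successively (\<lambda>x y. real (gdist V E x y) \<le> k) p)"
  unfolding k_connected_def succ_nth by auto

lemma walk_refl: "u \<in> V \<Longrightarrow> walk V E u u 0"
  unfolding walk_alt by (rule exI[of _ "[u]"]) auto

lemma walk_sym: assumes "graph V E" "walk V E u v n" shows "walk V E v u n"
proof -
  from assms(2) obtain p where p: "length p = Suc n" "hd p = u" "last p = v" "set p \<subseteq> V" "successively E p"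
    unfolding walk_alt by blast
  have "successively E (rev p)" unfolding successively_rev using p(5)
    by (rule successively_mono) (use assms(1) in \<open>auto simp: graph_def\<close>)
  moreover have "p \<noteq> []" using p(1) by auto
  ultimately show ?thesis using p unfolding walk_alt
    by (intro exI[of _ "rev p"]) (auto simp: hd_rev last_rev)
qed

lemma walk_trans: assumes "walk V E u v n" "walk V E v w m" shows "walk V E u w (n+m)"
proof -
  from assms(1) obtain p where p: "length p = Suc n" "hd p = u" "last p = v" "set p \<subseteq> V" "successively E p"
    unfolding walk_alt by blast
  from assms(2) obtain q where q: "length q = Suc m" "hd q = v" "last q = w" "set q \<subseteq> V" "successively E q"
    unfolding walk_alt by blast
  obtain q' where q': "q = v # q'" using q(1,2) by (cases q) auto
  have pn: "p \<noteq> []" using p(1) by auto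
  have "successively E (v # q')" using q(5) q' by simp
  then have "q' = [] \<or> E v (hd q') \<and> successively E q'" by (simp only: successively_Cons)
  then have "successively E (p @ q')"
    using p(3,5) pn by (auto simp: successively_append_iff)
  moreover have "hd (p @ q') = u" using p pn by simp
  moreover have "last (p @ q') = w" using p q q' pn by (cases "q' = []") auto
  ultimately show ?thesis using p q q' unfolding walk_alt
    by (intro exI[of _ "p @ q'"]) auto
qed

lemma walk_split: assumes "length p = Suc n" "hd p = u" "last p = v" "set p \<subseteq> V" "successively E p"
  "w \<in> set p" shows "\<exists>i j. i + j = n \<and> walk V E u w i \<and> walk V E w v j"
proof -
  obtain xs ys where s: "p = xs @ w # ys" using assms(6) by (meson split_list)
  have "walk V E u w (length xs)" unfolding walk_alt
    using assms s by (intro exI[of _ "xs @ [w]"]) (auto simp: successively_append_iff successively_Cons hd_append split: if_splits)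
  moreover have "walk V E w v (length ys)" unfolding walk_alt
    using assms s by (intro exI[of _ "w # ys"]) (auto simp: successively_append_iff)
  ultimately show ?thesis using assms(1) s by auto
qed

lemma walk_in: "walk V E u v n \<Longrightarrow> u \<in> V \<and> v \<in> V"
  unfolding walk_alt by (metis hd_in_set last_in_set list.size(3) nat.distinct(1) subsetD)

lemma walk_zero: "walk V E u v 0 \<Longrightarrow> u = v"
  unfolding walk_alt by (metis One_nat_def last_ConsL length_0_conv length_Suc_conv list.sel(1))

lemma walk_edge: "E u v \<Longrightarrow> u \<in> V \<Longrightarrow> v \<in> V \<Longrightarrow> walk V E u v 1"
  unfolding walk_alt by (intro exI[of _ "[u,v]"]) auto

context
  fixes V E assumes G: "graph V E" and C: "connected_graph V E"
begin

lemma gd_walk: "u \<in> V \<Longrightarrow> v \<in> V \<Longrightarrow> walk V E u v (gdist V E u v)"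
  unfolding gdist_def using C unfolding connected_graph_def by (meson LeastI)

lemma gd_le: "walk V E u v n \<Longrightarrow> gdist V E u v \<le> n"
  unfolding gdist_def by (rule Least_le)

lemma gd_sym: "u \<in> V \<Longrightarrow> v \<in> V \<Longrightarrow> gdist V E u v = gdist V E v u"
  by (meson G antisym gd_le gd_walk walk_sym)

lemma gd_tri: "u \<in> V \<Longrightarrow> v \<in> V \<Longrightarrow> w \<in> V \<Longrightarrow> gdist V E u w \<le> gdist V E u v + gdist V E v w"
  by (meson gd_le gd_walk walk_trans)

end

definition kch :: "'a set \<Rightarrow> ('a \<Rightarrow> 'a \<Rightarrow> bool) \<Rightarrow> real \<Rightarrow> 'a set \<Rightarrow> 'a \<Rightarrow> 'a \<Rightarrow> bool" where
  "kch V E k S a b \<longleftrightarrow> (\<exists>p. p \<noteq> [] \<and> hd p = a \<and> last p = b \<and> set p \<subseteq> S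
      \<and> successively (\<lambda>x y. real (gdist V E x y) \<le> k) p)"

lemma kconn_kch: "k_connected V E k X \<longleftrightarrow> (\<forall>a\<in>X. \<forall>b\<in>X. kch V E k X a b)"
  unfolding kconn_alt kch_def by blast

lemma kch_trans: assumes "kch V E k S a b" "kch V E k S b c" shows "kch V E k S a c"
proof -
  from assms(1) obtain p where p: "p \<noteq> []" "hd p = a" "last p = b" "set p \<subseteq> S" "successively (\<lambda>x y. real (gdist V E x y) \<le> k) p"
    unfolding kch_def by blast
  from assms(2) obtain q where q: "q \<noteq> []" "hd q = b" "last q = c" "set q \<subseteq> S" "successively (\<lambda>x y. real (gdist V E x y) \<le> k) q"
    unfolding kch_def by blast
  obtain q' where q': "q = b # q'" using q(1,2) by (cases q) auto
  have "successively (\<lambda>x y. real (gdist V E x y) \<le> k) (b # q')" using q(5) q' by simp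
  then have "q' = [] \<or> real (gdist V E b (hd q')) \<le> k \<and> successively (\<lambda>x y. real (gdist V E x y) \<le> k) q'"
    by (simp only: successively_Cons)
  then have "successively (\<lambda>x y. real (gdist V E x y) \<le> k) (p @ q')"
    using p(1,3,5) by (auto simp: successively_append_iff)
  moreover have "hd (p @ q') = a" using p by simp
  moreover have "last (p @ q') = c" using p q q' by (cases "q' = []") auto
  ultimately show ?thesis using p q q' unfolding kch_def
    by (intro exI[of _ "p @ q'"]) auto
qed

lemma kch_mono: "kch V E k S a b \<Longrightarrow> S \<subseteq> T \<Longrightarrow> kch V E k T a b"
  unfolding kch_def by blast

lemma kch_step: "a \<in> S \<Longrightarrow> b \<in> S \<Longrightarrow> real (gdist V E a b) \<le> k \<Longrightarrow> kch V E k S a b"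
  unfolding kch_def by (intro exI[of _ "[a,b]"]) auto

lemma kch_refl: "a \<in> S \<Longrightarrow> kch V E k S a a"
  unfolding kch_def by (intro exI[of _ "[a]"]) auto

lemma kch_sym: assumes G: "graph V E" and C: "connected_graph V E" and "S \<subseteq> V" "kch V E k S a b"
  shows "kch V E k S b a"
proof -
  from assms(4) obtain p where p: "p \<noteq> []" "hd p = a" "last p = b" "set p \<subseteq> S" "successively (\<lambda>x y. real (gdist V E x y) \<le> k) p"
    unfolding kch_def by blast
  have "successively (\<lambda>x y. real (gdist V E x y) \<le> k) (rev p)" unfolding successively_rev using p(5)
    by (rule successively_mono) (metis G C gd_sym assms(3) p(4) subsetD)
  then show ?thesis using p unfolding kch_def
    by (intro exI[of _ "rev p"]) (auto simp: hd_rev last_rev)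
qed

lemma sep: fixes lam x y :: real and N N' j :: int
  assumes "lam > 0" "of_int N * lam < x" "x \<le> (of_int N + 1) * lam"
    "of_int N' * lam < y" "y \<le> (of_int N' + 1) * lam" "N' \<ge> N + j"
  shows "y - x > (of_int j - 1) * lam"
proof -
  have "of_int (N + j) * lam \<le> of_int N' * lam"
    using assms by (intro mult_right_mono) auto
  then show ?thesis using assms by (simp add: algebra_simps)
qed

lemma layer_sub: "layer V E x0 lam N \<subseteq> V" unfolding layer_def by auto

lemma layer_uniq: assumes "lam > 0" "x \<in> layer V E x0 lam N" "x \<in> layer V E x0 lam N'" shows "N = N'"
proof (rule ccontr)
  define t where "t = real (gdist V E x x0)"
  have a: "of_int N * lam < t" "t \<le> (of_int N + 1) * lam" using assms(2) unfolding layer_def t_def by auto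
  have b: "of_int N' * lam < t" "t \<le> (of_int N' + 1) * lam" using assms(3) unfolding layer_def t_def by auto
  assume "N \<noteq> N'"
  then consider "N' \<ge> N + 1" | "N \<ge> N' + 1" by linarith
  then show False
  proof cases
    case 1 show False using sep[OF assms(1) a b 1] by simp
  next
    case 2 show False using sep[OF assms(1) b a 2] by simp
  qed
qed

context
  fixes V :: "'a set" and E and x0 :: 'a and lam k :: real assumes G: "graph V E" and C: "connected_graph V E" and lam: "lam \<ge> 1"
begin

lemma block_union: assumes "is_block V E x0 lam k B" "is_block V E x0 lam k D" "x \<in> B" "x \<in> D"
  shows "B = D"
proof -
  obtain N where N: "B \<subseteq> layer V E x0 lam N" "k_connected V E k B"
      "\<forall>C. B \<subseteq> C \<and> C \<subseteq> layer V E x0 lam N \<and> k_connected V E k C \<longrightarrow> C = B"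
    using assms(1) unfolding is_block_def by blast
  obtain N' where N': "D \<subseteq> layer V E x0 lam N'" "k_connected V E k D"
      "\<forall>C. D \<subseteq> C \<and> C \<subseteq> layer V E x0 lam N' \<and> k_connected V E k C \<longrightarrow> C = D"
    using assms(2) unfolding is_block_def by blast
  have "N = N'" by (rule layer_uniq[of lam x V E x0 N N']) (use lam assms(3,4) N(1) N'(1) in auto)
  have BD: "B \<union> D \<subseteq> layer V E x0 lam N" using N(1) N'(1) \<open>N = N'\<close> by auto
  have kc: "k_connected V E k (B \<union> D)" unfolding kconn_kch
  proof (intro ballI)
    fix a b assume ab: "a \<in> B \<union> D" "b \<in> B \<union> D"
    have hB: "kch V E k (B \<union> D) u v" if "u \<in> B" "v \<in> B" for u v
    proof -
      from N(2) that have "kch V E k B u v" unfolding kconn_kch by blast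
      then show ?thesis by (rule kch_mono) blast
    qed
    have hD: "kch V E k (B \<union> D) u v" if "u \<in> D" "v \<in> D" for u v
    proof -
      from N'(2) that have "kch V E k D u v" unfolding kconn_kch by blast
      then show ?thesis by (rule kch_mono) blast
    qed
    have "kch V E k (B \<union> D) a x" using ab(1) hB hD assms(3,4) by blast
    moreover have "kch V E k (B \<union> D) x b" using ab(2) hB hD assms(3,4) by blast
    ultimately show "kch V E k (B \<union> D) a b" by (rule kch_trans)
  qed
  have "B \<union> D = B" using N(3) BD kc by blast
  moreover have "B \<union> D = D" using N'(3) BD kc \<open>N = N'\<close> by blast
  ultimately show ?thesis by simp
qed

lemma block_absorb: assumes "is_block V E x0 lam k X" "X \<subseteq> layer V E x0 lam N" "a \<in> X"
  "w \<in> layer V E x0 lam N" "real (gdist V E a w) \<le> k" shows "w \<in> X"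
proof -
  obtain N' where N': "X \<subseteq> layer V E x0 lam N'" "k_connected V E k X"
      "\<forall>C. X \<subseteq> C \<and> C \<subseteq> layer V E x0 lam N' \<and> k_connected V E k C \<longrightarrow> C = X"
    using assms(1) unfolding is_block_def by blast
  have "N = N'" by (rule layer_uniq[of lam a V E x0 N N']) (use lam assms(2,3) N'(1) in auto)
  have sub: "insert w X \<subseteq> V" using assms(2,4) layer_sub[of V E x0 lam N] by blast
  have aw: "kch V E k (insert w X) a w" using assms(3,5) by (intro kch_step) auto
  have wa: "kch V E k (insert w X) w a" by (rule kch_sym[OF G C sub aw])
  have X: "kch V E k (insert w X) y z" if "y \<in> X" "z \<in> X" for y z
  proof -
    from N'(2) that have "kch V E k X y z" unfolding kconn_kch by blast
    then show ?thesis by (rule kch_mono) blast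
  qed
  have ww: "kch V E k (insert w X) w w" by (rule kch_refl) simp
  have wc: "kch V E k (insert w X) w c" if "c \<in> insert w X" for c
  proof (cases "c = w")
    case True then show ?thesis using ww by simp
  next
    case False then have "c \<in> X" using that by simp
    then show ?thesis by (rule kch_trans[OF wa X[OF assms(3)]])
  qed
  have kc: "k_connected V E k (insert w X)" unfolding kconn_kch
  proof (intro ballI)
    fix b c assume bc: "b \<in> insert w X" "c \<in> insert w X"
    show "kch V E k (insert w X) b c"
    proof (cases "b = w")
      case True
      then show ?thesis using wc bc(2) by simp
    next
      case False
      then have b: "b \<in> X" using bc by auto
      have "kch V E k (insert w X) b a" using X[OF b assms(3)] .
      then show ?thesis by (rule kch_trans[OF _ kch_trans[OF aw wc[OF bc(2)]]])
    qed
  qed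
  have "insert w X \<subseteq> layer V E x0 lam N'" using assms(2,4) \<open>N = N'\<close> by auto
  then have "insert w X = X" using N'(3) kc by blast
  then show ?thesis by auto
qed

lemma block_exists: assumes "v \<in> V" shows "\<exists>B. is_block V E x0 lam k B \<and> v \<in> B"
proof -
  define t where "t = real (gdist V E v x0)"
  define N where "N = \<lceil>t / lam\<rceil> - 1"
  have l0: "lam > 0" using lam by auto
  have c: "of_int \<lceil>t / lam\<rceil> - 1 < t / lam \<and> t / lam \<le> of_int \<lceil>t / lam\<rceil>" by (rule ceiling_correct)
  have "of_int N < t / lam" "t / lam \<le> of_int N + 1" unfolding N_def using c by simp_all
  then have "of_int N * lam < t" "t \<le> (of_int N + 1) * lam"
    using pos_less_divide_eq[OF l0] pos_divide_le_eq[OF l0] by simp_all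
  then have vL: "v \<in> layer V E x0 lam N" unfolding layer_def t_def using assms by auto
  define L where "L = layer V E x0 lam N"
  define B where "B = {w. kch V E k L v w}"
  have BL: "B \<subseteq> L"
  proof
    fix w assume "w \<in> B"
    then obtain p where "p \<noteq> []" "last p = w" "set p \<subseteq> L" unfolding B_def kch_def by blast
    then show "w \<in> L" using last_in_set by blast
  qed
  have LV: "L \<subseteq> V" unfolding L_def by (rule layer_sub)
  have vB: "v \<in> B" unfolding B_def L_def using kch_refl[OF vL] by simp
  have kcB: "kch V E k B v w" if "w \<in> B" for w
  proof -
    obtain p where p: "p \<noteq> []" "hd p = v" "last p = w" "set p \<subseteq> L" "successively (\<lambda>x y. real (gdist V E x y) \<le> k) p"
    proof -
      from \<open>w \<in> B\<close> have "kch V E k L v w" unfolding B_def by simp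
      then show ?thesis using that unfolding kch_def by blast
    qed
    have "set p \<subseteq> B"
    proof
      fix z assume "z \<in> set p"
      then obtain xs ys where s: "p = xs @ z # ys" by (meson split_list)
      have "successively (\<lambda>x y. real (gdist V E x y) \<le> k) ((xs @ [z]) @ ys)" using p(5) s by simp
      then have sp: "successively (\<lambda>x y. real (gdist V E x y) \<le> k) (xs @ [z])"
        unfolding successively_append_iff by blast
      have hp: "hd (xs @ [z]) = v" using p(2) s by (cases xs) auto
      have "set (xs @ [z]) \<subseteq> L" using p(4) s by auto
      then have "kch V E k L v z" unfolding kch_def
        using sp hp by (intro exI[of _ "xs @ [z]"]) auto
      then show "z \<in> B" unfolding B_def by auto
    qed
    then show ?thesis unfolding kch_def using p by blast
  qed
  have "k_connected V E k B" unfolding kconn_kch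
  proof (intro ballI)
    fix a b assume "a \<in> B" "b \<in> B"
    have BV: "B \<subseteq> V" using BL LV by (rule order_trans)
    have "kch V E k B a v" by (rule kch_sym[OF G C BV kcB[OF \<open>a \<in> B\<close>]])
    then show "kch V E k B a b" by (rule kch_trans[OF _ kcB[OF \<open>b \<in> B\<close>]])
  qed
  moreover have "\<forall>D. B \<subseteq> D \<and> D \<subseteq> L \<and> k_connected V E k D \<longrightarrow> D = B"
  proof (intro allI impI)
    fix D assume D: "B \<subseteq> D \<and> D \<subseteq> L \<and> k_connected V E k D"
    have "D \<subseteq> B"
    proof
      fix w assume "w \<in> D"
      then have "kch V E k D v w" using D vB unfolding kconn_kch by blast
      then have "kch V E k L v w" by (rule kch_mono) (use D in blast)
      then show "w \<in> B" unfolding B_def by simp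
    qed
    then show "D = B" using D by auto
  qed
  ultimately have "is_block V E x0 lam k B" unfolding is_block_def
    using BL vB unfolding L_def by (intro exI[of _ N]) blast
  then show ?thesis using vB by blast
qed

lemma skel_map_iff: assumes "is_block V E x0 lam k X" "v \<in> V"
  shows "skel_map V E x0 lam k v = X \<longleftrightarrow> v \<in> X"
proof -
  obtain B where B: "is_block V E x0 lam k B" "v \<in> B" using block_exists[OF assms(2)] by blast
  have "skel_map V E x0 lam k v = B" unfolding skel_map_def
  proof (rule the_equality)
    show "is_block V E x0 lam k B \<and> v \<in> B" using B by simp
    fix B' assume "is_block V E x0 lam k B' \<and> v \<in> B'"
    then show "B' = B" using block_union[OF _ B(1) _ B(2)] by blast
  qed
  moreover have "v \<in> X \<Longrightarrow> X = B" using block_union[OF assms(1) B(1) _ B(2)] by blast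
  ultimately show ?thesis using B by blast
qed

end

lemma cross: "successively E p \<Longrightarrow> p \<noteq> [] \<Longrightarrow> hd p \<in> X \<Longrightarrow> last p \<notin> X \<Longrightarrow> set p \<subseteq> X \<union> Y
  \<Longrightarrow> \<exists>u\<in>X. \<exists>v\<in>Y. E u v"
proof (induction p)
  case (Cons a p)
  then show ?case
    by (cases p) (auto simp: successively_Cons)
qed simp


lemma three: fixes lam x y z :: real and N1 N2 N3 :: int
  assumes l: "lam > 0"
    and x: "of_int N1 * lam < x" "x \<le> (of_int N1 + 1) * lam"
    and y: "of_int N2 * lam < y" "y \<le> (of_int N2 + 1) * lam"
    and z: "of_int N3 * lam < z" "z \<le> (of_int N3 + 1) * lam"
    and d: "\<bar>x - y\<bar> \<le> lam" "\<bar>x - z\<bar> \<le> lam" "\<bar>y - z\<bar> \<le> lam"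
    and n: "N1 \<noteq> N2" "N1 \<noteq> N3" "N2 \<noteq> N3"
  shows False
proof -
  have "N1 + 2 \<le> N2 \<or> N2 + 2 \<le> N1 \<or> N1 + 2 \<le> N3 \<or> N3 + 2 \<le> N1 \<or> N2 + 2 \<le> N3 \<or> N3 + 2 \<le> N2"
    using n by arith
  then show False
  proof (elim disjE)
    assume "N1 + 2 \<le> N2" then show False using sep[OF l x y, of 2] d by auto
  next
    assume "N2 + 2 \<le> N1" then show False using sep[OF l y x, of 2] d by auto
  next
    assume "N1 + 2 \<le> N3" then show False using sep[OF l x z, of 2] d by auto
  next
    assume "N3 + 2 \<le> N1" then show False using sep[OF l z x, of 2] d by auto
  next
    assume "N2 + 2 \<le> N3" then show False using sep[OF l y z, of 2] d by auto
  next
    assume "N3 + 2 \<le> N2" then show False using sep[OF l z y, of 2] d by auto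
  qed
qed

theorem lemma4:
  fixes V :: "'a set" and E :: "'a \<Rightarrow> 'a \<Rightarrow> bool" and x0 :: 'a
    and lam k :: real and X Y :: "'a set"
  assumes "graph V E" and "connected_graph V E" and "x0 \<in> V"
    and "lam \<ge> 1" and "k \<ge> 1"
    and "X \<in> skel_vertices V E x0 lam k" and "Y \<in> skel_vertices V E x0 lam k"
    and "X \<noteq> Y" and "\<not> skel_edge E X Y"
  shows "M_disjoint V E (min lam k)
           {v\<in>V. skel_map V E x0 lam k v = X} {v\<in>V. skel_map V E x0 lam k v = Y}"
proof -
  note G = assms(1) and C = assms(2)
  have l0: "lam > 0" using assms(4) by auto
  have XB: "is_block V E x0 lam k X" and YB: "is_block V E x0 lam k Y"
    using assms(6,7) unfolding skel_vertices_def by auto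
  obtain NX where NX: "X \<subseteq> layer V E x0 lam NX" using XB unfolding is_block_def by blast
  obtain NY where NY: "Y \<subseteq> layer V E x0 lam NY" using YB unfolding is_block_def by blast
  have disj: "X \<inter> Y = {}" using block_union[OF G C assms(4) XB YB] assms(8) by blast
  have inlayer: "\<exists>N. w \<in> layer V E x0 lam N" if "w \<in> V" for w
    using block_exists[OF G C assms(4) that, of x0 k] unfolding is_block_def by blast
  let ?d = "\<lambda>u v. real (gdist V E u v)"
  have lay: "of_int N * lam < ?d w x0 \<and> ?d w x0 \<le> (of_int N + 1) * lam" if "w \<in> layer V E x0 lam N" for w N
    using that unfolding layer_def by auto
  show ?thesis unfolding M_disjoint_def
  proof (intro ballI)
    fix a b assume a: "a \<in> {v\<in>V. skel_map V E x0 lam k v = X}" and b: "b \<in> {v\<in>V. skel_map V E x0 lam k v = Y}"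
    have aV: "a \<in> V" and aX: "a \<in> X" using a skel_map_iff[OF G C assms(4) XB] by auto
    have bV: "b \<in> V" and bY: "b \<in> Y" using b skel_map_iff[OF G C assms(4) YB] by auto
    show "real (gdist V E a b) > min lam k"
    proof (rule ccontr)
      assume "\<not> real (gdist V E a b) > min lam k"
      then have Lle: "?d a b \<le> lam" "?d a b \<le> k" by auto
      define L where "L = gdist V E a b"
      have "walk V E a b L" unfolding L_def by (rule gd_walk[OF G C aV bV])
      then obtain p where p: "length p = Suc L" "hd p = a" "last p = b" "set p \<subseteq> V" "successively E p"
        unfolding walk_alt by blast
      have dd: "?d a w \<le> ?d a b \<and> ?d w b \<le> ?d a b" if wp: "w \<in> set p" for w
      proof -
        obtain i j where ij: "i + j = L" "walk V E a w i" "walk V E w b j"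
          using walk_split[OF p wp] by blast
        have "gdist V E a w \<le> i" by (rule gd_le[OF G C ij(2)])
        moreover have "gdist V E w b \<le> j" by (rule gd_le[OF G C ij(3)])
        ultimately have "gdist V E a w \<le> gdist V E a b \<and> gdist V E w b \<le> gdist V E a b"
          using ij(1) unfolding L_def by linarith
        then show ?thesis by simp
      qed
      have tri: "\<bar>?d u x0 - ?d v x0\<bar> \<le> ?d u v" if "u \<in> V" "v \<in> V" for u v
        using gd_tri[OF G C that(1) that(2) assms(3)] gd_tri[OF G C that(2) that(1) assms(3)]
          gd_sym[OF G C that] by linarith
      have aL: "a \<in> layer V E x0 lam NX" using NX aX by auto
      have bL: "b \<in> layer V E x0 lam NY" using NY bY by auto
      have "NX \<noteq> NY"
      proof
        assume "NX = NY"
        then have "b \<in> X" using block_absorb[OF G C assms(4) XB NX aX] bL Lle by auto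
        then show False using disj bY by auto
      qed
      have "set p \<subseteq> X \<union> Y"
      proof
        fix w assume w: "w \<in> set p"
        then have wV: "w \<in> V" using p by auto
        obtain Nw where Nw: "w \<in> layer V E x0 lam Nw" using inlayer[OF wV] by blast
        have daw: "?d a w \<le> k" "?d a w \<le> lam" using dd[OF w] Lle by auto
        have dbw: "?d b w \<le> k" "?d b w \<le> lam" using dd[OF w] Lle gd_sym[OF G C wV bV] by auto
        consider "Nw = NX" | "Nw = NY" | "Nw \<noteq> NX" "Nw \<noteq> NY" by blast
        then show "w \<in> X \<union> Y"
        proof cases
          case 1
          then show ?thesis using block_absorb[OF G C assms(4) XB NX aX] Nw daw by auto
        next
          case 2
          then show ?thesis using block_absorb[OF G C assms(4) YB NY bY] Nw dbw by auto
        next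
          case 3
          have "\<bar>?d a x0 - ?d b x0\<bar> \<le> lam" using tri[OF aV bV] Lle by linarith
          moreover have "\<bar>?d a x0 - ?d w x0\<bar> \<le> lam" using tri[OF aV wV] daw by linarith
          moreover have "\<bar>?d b x0 - ?d w x0\<bar> \<le> lam" using tri[OF bV wV] dbw by linarith
          ultimately show ?thesis
            using three[OF l0 conjunct1[OF lay[OF aL]] conjunct2[OF lay[OF aL]]
                conjunct1[OF lay[OF bL]] conjunct2[OF lay[OF bL]]
                conjunct1[OF lay[OF Nw]] conjunct2[OF lay[OF Nw]]] 3 \<open>NX \<noteq> NY\<close> by auto
        qed
      qed
      moreover have "p \<noteq> []" using p(1) by auto
      moreover have "last p \<notin> X" using p(3) bY disj by auto
      ultimately have "\<exists>u\<in>X. \<exists>v\<in>Y. E u v" using cross[OF p(5)] p(2) aX by blast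
      then show False using assms(9) unfolding skel_edge_def by blast
    qed
  qed
qed

end
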